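(* Let $G=(V,E)$ be a directed graph in which every node has at least one out-neighbour, let $\alpha\in(0,1)$, $s\in V$, $r_{max}>0$, $\epsilon>0$, $\delta\in(0,1]$ and $p_f\in(0,1)$. Run the FORA estimator (described in the context) with $\omega=r_{sum}\cdot\frac{(2\epsilon/3+2)\ln(2/p_f)}{\epsilon^2\delta}$, where $r_{sum}$ is the total residue after Forward Push. Then for every node $t$ with $\pi(s,t)>\delta$, the returned estimate satisfies $|\pi(s,t)-\hat{\pi}(s,t)|\le\epsilon\cdot\pi(s,t)$ with probability at least $1-p_f$.
   Context: Random walk with restart from a node $u$: starting at $u$, at each step the walk terminates at the current node with probability $\alpha$, and otherwise moves to an out-neighbour of the current node chosen uniformly at random. The personalized PageRank $\pi(u,t)$ is the probability that such a walk from $u$ terminates at $t$. $N^{out}(v)$ denotes the set of out-neighbours of $v$. Forward Push (source $s$, threshold $r_{max}$): initialise residues $r(s,s)=1$, $r(s,v)=0$ for $v\neq s$, and reserves $\pi^\circ(s,v)=0$ for all $v$. While some node $v$ has $r(s,v)/|N^{out}(v)|>r_{max}$, pick such a $v$; for each $u\in N^{out}(v)$ increase $r(s,u)$ by $(1-\alpha)r(s,v)/|N^{out}(v)|$; increase $\pi^\circ(s,v)$ by $\alpha\, r(s,v)$; set $r(s,v)=0$. FORA estimator (parameter $\omega>0$): run Forward Push, let $r_{sum}=\sum_{v} r(s,v)$, and set $\hat{\pi}(s,v)=\pi^\circ(s,v)$ for all $v$. For each node $v_i$ with $r(s,v_i)>0$, let $\omega_i=\lceil r(s,v_i)\,\omega/r_{sum}\rceil$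 and $a_i=\frac{r(s,v_i)}{r_{sum}}\cdot\frac{\omega}{\omega_i}$; generate $\omega_i$ independent random walks with restart from $v_i$, and for each, if it terminates at $t$, increase $\hat{\pi}(s,t)$ by $a_i\, r_{sum}/\omega$. Return all $\hat{\pi}(s,v)$. *)

theory Defs
  imports "HOL-Probability.Probability"
begin

text \<open>Random walk with restart from u: the number of moves before termination is
  geometric (each step terminates with prob. alpha), each move goes to a uniformly
  random out-neighbour.\<close>

primrec walk_pmf :: "('a \<Rightarrow> 'a set) \<Rightarrow> nat \<Rightarrow> 'a \<Rightarrow> 'a pmf" where
  "walk_pmf N 0 u = return_pmf u"
| "walk_pmf N (Suc k) u = bind_pmf (pmf_of_set (N u)) (\<lambda>v. walk_pmf N k v)"

definition rwr_pmf :: "real \<Rightarrow> ('a \<Rightarrow> 'a set) \<Rightarrow> 'a \<Rightarrow> 'a pmf" where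
  "rwr_pmf \<alpha> N u = bind_pmf (geometric_pmf \<alpha>) (\<lambda>k. walk_pmf N k u)"

definition ppr :: "real \<Rightarrow> ('a \<Rightarrow> 'a set) \<Rightarrow> 'a \<Rightarrow> 'a \<Rightarrow> real" where
  "ppr \<alpha> N u t = pmf (rwr_pmf \<alpha> N u) t"

text \<open>Forward Push. A state is (reserve, residue).\<close>
definition fp_init :: "'a \<Rightarrow> ('a \<Rightarrow> real) \<times> ('a \<Rightarrow> real)" where
  "fp_init s = ((\<lambda>v. 0), (\<lambda>v. if v = s then 1 else 0))"

inductive fp_step :: "real \<Rightarrow> ('a \<Rightarrow> 'a set) \<Rightarrow> 'a set \<Rightarrow> real
    \<Rightarrow> ('a \<Rightarrow> real) \<times> ('a \<Rightarrow> real) \<Rightarrow> ('a \<Rightarrow> real) \<times> ('a \<Rightarrow> real) \<Rightarrow> bool"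
  for \<alpha> N V rmax where
  push: "v \<in> V \<Longrightarrow> r v / real (card (N v)) > rmax \<Longrightarrow>
    fp_step \<alpha> N V rmax (p, r)
      (p(v := p v + \<alpha> * r v),
       (\<lambda>u. (if u = v then 0 else r u) +
            (if u \<in> N v then (1 - \<alpha>) * r v / real (card (N v)) else 0)))"

definition fp_result :: "real \<Rightarrow> ('a \<Rightarrow> 'a set) \<Rightarrow> 'a set \<Rightarrow> real \<Rightarrow> 'a
    \<Rightarrow> ('a \<Rightarrow> real) \<times> ('a \<Rightarrow> real) \<Rightarrow> bool" where
  "fp_result \<alpha> N V rmax s st \<longleftrightarrow>
     (fp_step \<alpha> N V rmax)\<^sup>*\<^sup>* (fp_init s) st \<and>
     (\<forall>v\<in>V. \<not> (snd st v / real (card (N v)) > rmax))"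

text \<open>Walk number j from node v (j < omega_v) is W (v, j); all walks are independent.\<close>
definition fora_pmf :: "real \<Rightarrow> ('a \<Rightarrow> 'a set) \<Rightarrow> 'a set \<Rightarrow> ('a \<Rightarrow> real) \<Rightarrow> ('a \<Rightarrow> real)
    \<Rightarrow> real \<Rightarrow> ('a \<Rightarrow> real) pmf" where
  "fora_pmf \<alpha> N V p r \<omega> =
    (let rsum = (\<Sum>v\<in>V. r v);
         S = {v \<in> V. r v > 0};
         om = (\<lambda>v. nat \<lceil>r v * \<omega> / rsum\<rceil>);
         a = (\<lambda>v. r v / rsum * (\<omega> / real (om v)));
         I = {(v, j). v \<in> S \<and> j < om v}
     in map_pmf
          (\<lambda>W t. p t + (\<Sum>(v, j)\<in>I. if W (v, j) = t then a v * rsum / \<omega> else 0))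
          (Pi_pmf I undefined (\<lambda>(v, j). rwr_pmf \<alpha> N v)))"

end

theory Submission
  imports Defs
begin


lemma fact_ge_3pow: "2 * 3 ^ n \<le> (fact (n + 2) :: real)"
proof (induction n)
  case 0 then show ?case by (simp add: numeral_2_eq_2)
next
  case (Suc n)
  have "fact (Suc n + 2) = real (Suc n + 2) * (fact (n + 2) :: real)"
    by (simp add: algebra_simps)
  also have "\<dots> \<ge> 3 * fact (n + 2)"
    by (intro mult_right_mono) auto
  moreover have "2 * 3 ^ Suc n = 3 * (2 * 3 ^ n :: real)" by simp
  ultimately show ?case using Suc by linarith
qed

lemma exp_bern_bound:
  fixes x :: real assumes "0 \<le> x" "x < 3"
  shows "exp x - 1 - x \<le> x\<^sup>2 / (2 * (1 - x / 3))"
proof -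
  have "(\<lambda>n. x ^ n / fact n) sums exp x"
    using exp_converges[of x] by (simp add: scaleR_conv_of_real divide_inverse mult.commute)
  hence s1: "(\<lambda>n. x ^ (n + 2) / fact (n + 2)) sums (exp x - 1 - x)"
    using sums_iff_shift[of "\<lambda>n. x ^ n / fact n" 2 "exp x - 1 - x"] by (simp add: numeral_2_eq_2)
  have "(\<lambda>n. (x / 3) ^ n) sums (1 / (1 - x / 3))"
    using assms by (intro geometric_sums) auto
  hence s2: "(\<lambda>n. x\<^sup>2 / 2 * (x / 3) ^ n) sums (x\<^sup>2 / 2 * (1 / (1 - x / 3)))"
    by (rule sums_mult)
  have "x ^ (n + 2) / fact (n + 2) \<le> x\<^sup>2 / 2 * (x / 3) ^ n" for n
  proof -
    have "x ^ (n + 2) / fact (n + 2) \<le> x ^ (n + 2) / (2 * 3 ^ n)"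
      using fact_ge_3pow[of n] assms by (intro divide_left_mono) auto
    also have "\<dots> = x\<^sup>2 / 2 * (x / 3) ^ n"
      by (simp add: power_add power_divide power2_eq_square)
    finally show ?thesis .
  qed
  from sums_le[OF this s1 s2] show ?thesis by simp
qed



lemma rwr_unfold:
  assumes "0 < \<alpha>" "\<alpha> < 1"
  shows "rwr_pmf \<alpha> N u = bernoulli_pmf \<alpha> \<bind>
           (\<lambda>b. if b then return_pmf u else pmf_of_set (N u) \<bind> (\<lambda>w. rwr_pmf \<alpha> N w))"
proof -
  have "rwr_pmf \<alpha> N u = bernoulli_pmf \<alpha> \<bind>
      (\<lambda>b. (if b then return_pmf 0 else map_pmf Suc (geometric_pmf \<alpha>)) \<bind> (\<lambda>k. walk_pmf N k u))"
    unfolding rwr_pmf_def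
    by (subst geometric_bind_pmf_unfold) (use assms in \<open>auto simp: bind_assoc_pmf\<close>)
  also have "\<dots> = bernoulli_pmf \<alpha> \<bind>
           (\<lambda>b. if b then return_pmf u else pmf_of_set (N u) \<bind> (\<lambda>w. rwr_pmf \<alpha> N w))"
  proof (intro bind_pmf_cong refl)
    fix b :: bool
    show "(if b then return_pmf 0 else map_pmf Suc (geometric_pmf \<alpha>)) \<bind> (\<lambda>k. walk_pmf N k u) =
          (if b then return_pmf u else pmf_of_set (N u) \<bind> (\<lambda>w. rwr_pmf \<alpha> N w))"
    proof (cases b)
      case True then show ?thesis by (simp add: bind_return_pmf)
    next
      case False
      have "map_pmf Suc (geometric_pmf \<alpha>) \<bind> (\<lambda>k. walk_pmf N k u)
          = geometric_pmf \<alpha> \<bind> (\<lambda>k. pmf_of_set (N u) \<bind> (\<lambda>w. walk_pmf N k w))"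
        by (simp add: bind_map_pmf)
      also have "\<dots> = pmf_of_set (N u) \<bind> (\<lambda>w. rwr_pmf \<alpha> N w)"
        unfolding rwr_pmf_def by (rule bind_commute_pmf)
      finally show ?thesis using False by simp
    qed
  qed
  finally show ?thesis .
qed

lemma ppr_rec:
  assumes "0 < \<alpha>" "\<alpha> < 1" "finite (N u)" "N u \<noteq> {}"
  shows "ppr \<alpha> N u t = \<alpha> * (if u = t then 1 else 0)
           + (1 - \<alpha>) / real (card (N u)) * (\<Sum>w\<in>N u. ppr \<alpha> N w t)"
proof -
  have "ppr \<alpha> N u t = \<alpha> * pmf (return_pmf u) t
      + (1 - \<alpha>) * pmf (pmf_of_set (N u) \<bind> (\<lambda>w. rwr_pmf \<alpha> N w)) t"
    unfolding ppr_def using assms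
    by (subst rwr_unfold) (auto simp: pmf_bind)
  also have "pmf (pmf_of_set (N u) \<bind> (\<lambda>w. rwr_pmf \<alpha> N w)) t
      = (\<Sum>w\<in>N u. ppr \<alpha> N w t) / real (card (N u))"
    using assms by (simp add: pmf_bind integral_pmf_of_set ppr_def)
  finally show ?thesis by (simp add: pmf_return indicator_def)
qed

definition inv_fp where
  "inv_fp \<alpha> N V s st \<longleftrightarrow>
     (\<forall>t. ppr \<alpha> N s t = fst st t + (\<Sum>v\<in>V. snd st v * ppr \<alpha> N v t)) \<and>
     (\<forall>v. snd st v \<ge> 0) \<and> (\<forall>v. fst st v \<ge> 0)"

lemma inv_fp_init:
  assumes "finite V" "s \<in> V"
  shows "inv_fp \<alpha> N V s (fp_init s)"
proof -
  have "(\<Sum>v\<in>V. (if v = s then 1 else 0) * ppr \<alpha> N v t) = ppr \<alpha> N s t" for t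
  proof -
    have "(\<Sum>v\<in>V. (if v = s then 1 else 0) * ppr \<alpha> N v t) = (\<Sum>v\<in>V. if v = s then ppr \<alpha> N v t else 0)"
      by (intro sum.cong) auto
    also have "\<dots> = ppr \<alpha> N s t" using assms by simp
    finally show ?thesis .
  qed
  then show ?thesis by (simp add: inv_fp_def fp_init_def)
qed

lemma inv_fp_step:
  assumes "finite V" "\<forall>v\<in>V. N v \<subseteq> V \<and> N v \<noteq> {}" "0 < \<alpha>" "\<alpha> < 1"
    and "fp_step \<alpha> N V rmax st st'" "inv_fp \<alpha> N V s st"
  shows "inv_fp \<alpha> N V s st'"
  using assms(5)
proof cases
  case (push v r p)
  have v: "v \<in> V" and NV: "N v \<subseteq> V" "N v \<noteq> {}" using push assms(2) by auto
  have finN: "finite (N v)" using NV assms(1) finite_subset by blast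
  have cpos: "real (card (N v)) > 0" using finN NV by (simp add: card_gt_0_iff)
  from assms(6) push have I: "\<And>t. ppr \<alpha> N s t = p t + (\<Sum>u\<in>V. r u * ppr \<alpha> N u t)"
    and rnn: "\<And>u. r u \<ge> 0" and pnn: "\<And>u. p u \<ge> 0" by (auto simp: inv_fp_def)
  define c where "c = (1 - \<alpha>) * r v / real (card (N v))"
  have cnn: "c \<ge> 0" using rnn[of v] assms cpos by (simp add: c_def)
  show ?thesis unfolding inv_fp_def push(2) fst_conv snd_conv
  proof (intro conjI allI)
    fix t
    have split: "(\<Sum>u\<in>V. ((if u = v then 0 else r u) + (if u \<in> N v then c else 0)) * ppr \<alpha> N u t)
        = (\<Sum>u\<in>V. r u * ppr \<alpha> N u t) - r v * ppr \<alpha> N v t + c * (\<Sum>u\<in>N v. ppr \<alpha> N u t)"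
    proof -
      have "(\<Sum>u\<in>V. ((if u = v then 0 else r u) + (if u \<in> N v then c else 0)) * ppr \<alpha> N u t)
          = (\<Sum>u\<in>V. (if u = v then 0 else r u) * ppr \<alpha> N u t) + (\<Sum>u\<in>V. (if u \<in> N v then c else 0) * ppr \<alpha> N u t)"
        by (simp add: distrib_right sum.distrib)
      also have "(\<Sum>u\<in>V. (if u = v then 0 else r u) * ppr \<alpha> N u t) = (\<Sum>u\<in>V. r u * ppr \<alpha> N u t) - r v * ppr \<alpha> N v t"
      proof -
        have "(\<Sum>u\<in>V. r u * ppr \<alpha> N u t) = r v * ppr \<alpha> N v t + (\<Sum>u\<in>V - {v}. r u * ppr \<alpha> N u t)"
          using v assms(1) by (simp add: sum.remove)
        moreover have "(\<Sum>u\<in>V. (if u = v then 0 else r u) * ppr \<alpha> N u t) = (\<Sum>u\<in>V - {v}. r u * ppr \<alpha> N u t)"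
          using v assms(1) by (simp add: sum.remove)
        ultimately show ?thesis by simp
      qed
      also have "(\<Sum>u\<in>V. (if u \<in> N v then c else 0) * ppr \<alpha> N u t) = c * (\<Sum>u\<in>N v. ppr \<alpha> N u t)"
      proof -
        have "(\<Sum>u\<in>V. (if u \<in> N v then c else 0) * ppr \<alpha> N u t) = (\<Sum>u\<in>V. if u \<in> N v then c * ppr \<alpha> N u t else 0)"
          by (intro sum.cong) auto
        also have "\<dots> = (\<Sum>u\<in>V \<inter> N v. c * ppr \<alpha> N u t)"
          using assms(1) by (simp add: sum.inter_restrict)
        also have "V \<inter> N v = N v" using NV by blast
        finally show ?thesis by (simp add: sum_distrib_left)
      qed
      finally show ?thesis .
    qed
    have rec: "ppr \<alpha> N v t = \<alpha> * (if v = t then 1 else 0) + (1 - \<alpha>) / real (card (N v)) * (\<Sum>w\<in>N v. ppr \<alpha> N w t)"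
      by (rule ppr_rec) (use assms finN NV in auto)
    have cc: "c * (\<Sum>u\<in>N v. ppr \<alpha> N u t) = r v * ((1 - \<alpha>) / real (card (N v)) * (\<Sum>w\<in>N v. ppr \<alpha> N w t))"
      by (simp add: c_def)
    show "ppr \<alpha> N s t = (p(v := p v + \<alpha> * r v)) t +
        (\<Sum>u\<in>V. ((if u = v then 0 else r u) + (if u \<in> N v then (1 - \<alpha>) * r v / real (card (N v)) else 0)) * ppr \<alpha> N u t)"
      unfolding c_def[symmetric] split I[of t] cc using rec
      by (auto simp: algebra_simps)
  next
    fix u
    show "0 \<le> (if u = v then 0 else r u) + (if u \<in> N v then (1 - \<alpha>) * r v / real (card (N v)) else 0)"
      using rnn[of u] cnn unfolding c_def by auto
  next
    fix u
    show "0 \<le> (p(v := p v + \<alpha> * r v)) u" using pnn rnn assms(3) by auto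
  qed
qed

lemma inv_fp_result:
  assumes "finite V" "\<forall>v\<in>V. N v \<subseteq> V \<and> N v \<noteq> {}" "0 < \<alpha>" "\<alpha> < 1" "s \<in> V"
    and "fp_result \<alpha> N V rmax s st"
  shows "inv_fp \<alpha> N V s st"
proof -
  have "(fp_step \<alpha> N V rmax)\<^sup>*\<^sup>* (fp_init s) st" using assms(6) by (simp add: fp_result_def)
  then show ?thesis
    by (induction rule: rtranclp_induct)
       (use inv_fp_init[OF assms(1,5)] inv_fp_step[OF assms(1-4)] in blast)+
qed



lemma exp_lin_bound:
  fixes b x \<theta> :: real assumes "b > 0" "0 \<le> x" "x \<le> b"
  shows "exp (\<theta> * x) \<le> 1 + x * (exp (\<theta> * b) - 1) / b"
proof -
  define y where "y = x / b"
  have y: "0 \<le> y" "y \<le> 1" using assms by (auto simp: y_def)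
  have conv: "exp ((1 - y) *\<^sub>R 0 + y *\<^sub>R (\<theta> * b)) \<le> (1 - y) * exp 0 + y * exp (\<theta> * b)"
    by (rule convex_onD[OF exp_convex]) (use y in auto)
  have eq: "(1 - y) *\<^sub>R 0 + y *\<^sub>R (\<theta> * b) = \<theta> * x" using assms by (simp add: y_def)
  have "exp (\<theta> * x) \<le> (1 - y) * exp 0 + y * exp (\<theta> * b)" using conv unfolding eq .
  moreover have "(1 - y) * exp 0 + y * exp (\<theta> * b) = 1 + x * (exp (\<theta> * b) - 1) / b"
    using assms by (simp add: y_def field_simps)
  ultimately show ?thesis by linarith
qed

lemma mgf_single:
  fixes f :: "'b \<Rightarrow> real" and Q :: "'b pmf"
  assumes "b > 0" "\<And>y. 0 \<le> f y" "\<And>y. f y \<le> b"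
  shows "measure_pmf.expectation Q (\<lambda>y. exp (\<theta> * f y))
           \<le> exp (measure_pmf.expectation Q f * (exp (\<theta> * b) - 1) / b)"
proof -
  have intf: "integrable Q f"
    by (intro measure_pmf.integrable_const_bound[where B=b]) (use assms in \<open>auto intro: abs_leI order.trans\<close>)
  have "measure_pmf.expectation Q (\<lambda>y. exp (\<theta> * f y))
        \<le> measure_pmf.expectation Q (\<lambda>y. 1 + f y * ((exp (\<theta> * b) - 1) / b))"
  proof (rule integral_mono)
    show "integrable Q (\<lambda>y. exp (\<theta> * f y))"
      by (intro measure_pmf.integrable_const_bound[where B="exp (\<bar>\<theta>\<bar> * b)"])
         (use assms in \<open>auto intro!: mult_mono simp: abs_mult\<close>)
    show "integrable Q (\<lambda>y. 1 + f y * ((exp (\<theta> * b) - 1) / b))"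
      using intf by auto
    show "exp (\<theta> * f y) \<le> 1 + f y * ((exp (\<theta> * b) - 1) / b)" for y
      using exp_lin_bound[OF assms(1) assms(2)[of y] assms(3)[of y], of \<theta>] by simp
  qed
  also have "\<dots> = 1 + measure_pmf.expectation Q f * (exp (\<theta> * b) - 1) / b"
    using intf by (simp add: Bochner_Integration.integral_add)
  also have "\<dots> \<le> exp (measure_pmf.expectation Q f * (exp (\<theta> * b) - 1) / b)"
    by (rule exp_ge_add_one_self[THEN order.trans[rotated]]) simp
  finally show ?thesis .
qed



lemma exp_neg_bound:
  fixes x :: real assumes "0 \<le> x"
  shows "exp (- x) - 1 + x \<le> x\<^sup>2 / 2"
proof -
  obtain t where "exp (- x) = (\<Sum>m<3. ((-x) ^ m) / fact m) + (exp t / fact 3) * (-x) ^ 3"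
    using Maclaurin_exp_le[of "-x" 3] by blast
  moreover have "(\<Sum>m<3. ((-x) ^ m) / fact m) = 1 - x + x\<^sup>2 / 2"
    by (simp add: numeral_3_eq_3 power2_eq_square fact_numeral)
  moreover have "(exp t / fact 3) * (-x) ^ 3 \<le> 0"
    using assms by (intro mult_nonneg_nonpos) (auto simp: power_odd_eq)
  ultimately show ?thesis by linarith
qed

lemma mgf_Pi:
  fixes f :: "'i \<Rightarrow> 'b \<Rightarrow> real"
  assumes "finite A" "b > 0" "\<And>i y. i \<in> A \<Longrightarrow> 0 \<le> f i y" "\<And>i y. i \<in> A \<Longrightarrow> f i y \<le> b"
  shows "measure_pmf.expectation (Pi_pmf A d P) (\<lambda>y. exp (\<theta> * (\<Sum>i\<in>A. f i (y i))))
     \<le> exp ((\<Sum>i\<in>A. measure_pmf.expectation (P i) (f i)) * (exp (\<theta> * b) - 1) / b)"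
proof -
  have "(\<lambda>y. exp (\<theta> * (\<Sum>i\<in>A. f i (y i)))) = (\<lambda>y. \<Prod>i\<in>A. exp (\<theta> * f i (y i)))"
    using assms(1) by (simp add: sum_distrib_left exp_sum)
  hence "measure_pmf.expectation (Pi_pmf A d P) (\<lambda>y. exp (\<theta> * (\<Sum>i\<in>A. f i (y i))))
      = (\<Prod>i\<in>A. measure_pmf.expectation (P i) (\<lambda>v. exp (\<theta> * f i v)))"
  proof (simp only:, intro expectation_prod_Pi_pmf assms(1))
    fix i assume i: "i \<in> A"
    show "integrable (measure_pmf (P i)) (\<lambda>v. exp (\<theta> * f i v))"
      by (intro measure_pmf.integrable_const_bound[where B="exp (\<bar>\<theta>\<bar> * b)"])
         (use assms i in \<open>auto intro!: mult_mono simp: abs_mult\<close>)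
  qed auto
  also have "\<dots> \<le> (\<Prod>i\<in>A. exp (measure_pmf.expectation (P i) (f i) * (exp (\<theta> * b) - 1) / b))"
    by (intro prod_mono conjI mgf_single Bochner_Integration.integral_nonneg)
       (use assms in auto)
  also have "\<dots> = exp ((\<Sum>i\<in>A. measure_pmf.expectation (P i) (f i)) * (exp (\<theta> * b) - 1) / b)"
    using assms(1) by (simp add: exp_sum sum_distrib_right sum_divide_distrib)
  finally show ?thesis .
qed

lemma markov_exp:
  fixes g :: "'c \<Rightarrow> real" and Q :: "'c pmf"
  assumes "\<And>y. \<bar>g y\<bar> \<le> B"
  shows "measure_pmf.prob Q {y. c \<le> g y} \<le> exp (- c) * measure_pmf.expectation Q (\<lambda>y. exp (g y))"
proof -
  have gB: "g y \<le> B" for y using assms[of y] by linarith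
  have intg: "integrable Q (\<lambda>y. exp (g y))"
    by (intro measure_pmf.integrable_const_bound[where B="exp B"]) (use gB in auto)
  have "measure_pmf.prob Q {y. c \<le> g y} = measure_pmf.expectation Q (indicator {y. c \<le> g y})"
    by simp
  also have "\<dots> \<le> measure_pmf.expectation Q (\<lambda>y. exp (- c) * exp (g y))"
  proof (rule integral_mono)
    show "integrable Q (indicator {y. c \<le> g y} :: _ \<Rightarrow> real)"
      by (intro measure_pmf.integrable_const_bound[where B=1]) (auto simp: indicator_def)
    show "integrable Q (\<lambda>y. exp (- c) * exp (g y))" using intg by auto
    show "indicator {y. c \<le> g y} y \<le> exp (- c) * exp (g y)" for y
      by (auto simp: indicator_def simp flip: exp_add)
  qed
  also have "\<dots> = exp (- c) * measure_pmf.expectation Q (\<lambda>y. exp (g y))" by simp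
  finally show ?thesis .
qed

lemma bernstein_Pi:
  fixes f :: "'i \<Rightarrow> 'b \<Rightarrow> real"
  assumes "finite A" "b > 0" "\<And>i y. i \<in> A \<Longrightarrow> 0 \<le> f i y" "\<And>i y. i \<in> A \<Longrightarrow> f i y \<le> b"
    and "\<mu> = (\<Sum>i\<in>A. measure_pmf.expectation (P i) (f i))" and "\<mu> \<le> M" and "M > 0" and "l > 0"
  shows "measure_pmf.prob (Pi_pmf A d P) {y. \<bar>(\<Sum>i\<in>A. f i (y i)) - \<mu>\<bar> \<ge> l}
           \<le> 2 * exp (- (l\<^sup>2 / (2 * b * (M + l / 3))))"
proof -
  define Q where "Q = Pi_pmf A d P"
  define S where "S = (\<lambda>y. \<Sum>i\<in>A. f i (y i))"
  define x where "x = l / (M + l / 3)"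
  define \<theta> where "\<theta> = x / b"
  have Sb: "\<bar>S y\<bar> \<le> real (card A) * b" for y
  proof -
    have "0 \<le> S y" unfolding S_def by (intro sum_nonneg) (use assms in auto)
    moreover have "S y \<le> (\<Sum>i\<in>A. b)" unfolding S_def by (intro sum_mono) (use assms in auto)
    ultimately show ?thesis by simp
  qed
  have bnd: "\<bar>c * S y\<bar> \<le> \<bar>\<theta>\<bar> * (real (card A) * b)" if "\<bar>c\<bar> = \<bar>\<theta>\<bar>" for c y
    unfolding abs_mult that by (intro mult_left_mono Sb) auto
  have mu0: "0 \<le> \<mu>" unfolding assms(5)
    by (intro sum_nonneg Bochner_Integration.integral_nonneg) (use assms in auto)
  have x: "0 < x" "x < 3" using assms by (auto simp: x_def field_simps)
  have th: "\<theta> > 0" using x assms by (simp add: \<theta>_def)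
  have phi: "exp x - 1 - x \<le> x\<^sup>2 / (2 * (1 - x / 3))" by (rule exp_bern_bound) (use x in auto)
  have D: "M + l / 3 > 0" using assms by simp
  have xD: "x * (M + l / 3) = l" using D by (simp add: x_def)
  have x3: "1 - x / 3 = M / (M + l / 3)" using D by (simp add: x_def field_simps)
  have "M * (x\<^sup>2 / (2 * (1 - x / 3))) = x * (x * (M + l / 3)) / 2"
    unfolding x3 using D assms by (simp add: field_simps power2_eq_square)
  hence key: "M * (x\<^sup>2 / (2 * (1 - x / 3))) = x * l / 2" unfolding xD .
  have fin: "- (x * l / 2) / b = - (l\<^sup>2 / (2 * b * (M + l / 3)))"
    using assms x by (simp add: x_def field_simps power2_eq_square)
  have phinn: "0 \<le> exp x - 1 - x" using exp_ge_add_one_self[of x] by linarith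
  have E: "(\<mu> * (exp x - 1 - x) - x * l) / b \<le> - (l\<^sup>2 / (2 * b * (M + l / 3)))"
  proof -
    have "\<mu> * (exp x - 1 - x) \<le> M * (exp x - 1 - x)"
      by (intro mult_right_mono assms phinn)
    also have "\<dots> \<le> M * (x\<^sup>2 / (2 * (1 - x / 3)))"
      by (intro mult_left_mono phi) (use assms in auto)
    finally have "\<mu> * (exp x - 1 - x) \<le> x * l / 2" using key by linarith
    hence "\<mu> * (exp x - 1 - x) - x * l \<le> x * l / 2 - x * l" by linarith
    hence "(\<mu> * (exp x - 1 - x) - x * l) / b \<le> (x * l / 2 - x * l) / b"
      by (rule divide_right_mono) (use assms(2) in simp)
    also have "\<dots> = - (x * l / 2) / b" by simp
    finally show ?thesis using fin by simp
  qed
  have up: "measure_pmf.prob Q {y. S y \<ge> \<mu> + l} \<le> exp (- (l\<^sup>2 / (2 * b * (M + l / 3))))"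
  proof -
    have "{y. S y \<ge> \<mu> + l} = {y. \<theta> * (\<mu> + l) \<le> \<theta> * S y}" using th by auto
    hence "measure_pmf.prob Q {y. S y \<ge> \<mu> + l} \<le> exp (- (\<theta> * (\<mu> + l))) * measure_pmf.expectation Q (\<lambda>y. exp (\<theta> * S y))"
      using markov_exp[of "\<lambda>y. \<theta> * S y" "\<bar>\<theta>\<bar> * (real (card A) * b)" Q "\<theta> * (\<mu> + l)"] bnd
      by simp
    also have "\<dots> \<le> exp (- (\<theta> * (\<mu> + l))) * exp (\<mu> * (exp (\<theta> * b) - 1) / b)"
      unfolding Q_def S_def assms(5) by (intro mult_left_mono mgf_Pi) (use assms in auto)
    also have "\<dots> = exp ((\<mu> * (exp x - 1 - x) - x * l) / b)"
      using assms by (simp add: \<theta>_def field_simps flip: exp_add)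
    also have "\<dots> \<le> exp (- (l\<^sup>2 / (2 * b * (M + l / 3))))" using E by simp
    finally show ?thesis .
  qed
  have lo: "measure_pmf.prob Q {y. S y \<le> \<mu> - l} \<le> exp (- (l\<^sup>2 / (2 * b * (M + l / 3))))"
  proof -
    have "{y. S y \<le> \<mu> - l} = {y. (- \<theta>) * (\<mu> - l) \<le> (- \<theta>) * S y}" using th by auto
    hence "measure_pmf.prob Q {y. S y \<le> \<mu> - l} \<le> exp (- ((- \<theta>) * (\<mu> - l))) * measure_pmf.expectation Q (\<lambda>y. exp ((- \<theta>) * S y))"
      using markov_exp[of "\<lambda>y. (- \<theta>) * S y" "\<bar>\<theta>\<bar> * (real (card A) * b)" Q "(- \<theta>) * (\<mu> - l)"] bnd
      by simp
    also have "\<dots> \<le> exp (- ((- \<theta>) * (\<mu> - l))) * exp (\<mu> * (exp ((- \<theta>) * b) - 1) / b)"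
      unfolding Q_def S_def assms(5) by (intro mult_left_mono mgf_Pi) (use assms in auto)
    also have "\<dots> = exp ((\<mu> * (exp (- x) - 1 + x) - x * l) / b)"
      using assms by (simp add: \<theta>_def field_simps flip: exp_add)
    also have "\<dots> \<le> exp ((\<mu> * (exp x - 1 - x) - x * l) / b)"
    proof -
      have "exp (- x) - 1 + x \<le> x\<^sup>2 / 2" using exp_neg_bound[of x] x by simp
      also have "\<dots> \<le> exp x - 1 - x" using exp_lower_Taylor_quadratic[of x] x by simp
      finally have "\<mu> * (exp (- x) - 1 + x) \<le> \<mu> * (exp x - 1 - x)"
        by (intro mult_left_mono mu0)
      then show ?thesis using assms by (simp add: divide_right_mono)
    qed
    also have "\<dots> \<le> exp (- (l\<^sup>2 / (2 * b * (M + l / 3))))" using E by simp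
    finally show ?thesis .
  qed
  have "{y. \<bar>S y - \<mu>\<bar> \<ge> l} \<subseteq> {y. S y \<ge> \<mu> + l} \<union> {y. S y \<le> \<mu> - l}" by auto
  hence "measure_pmf.prob Q {y. \<bar>S y - \<mu>\<bar> \<ge> l} \<le> measure_pmf.prob Q ({y. S y \<ge> \<mu> + l} \<union> {y. S y \<le> \<mu> - l})"
    by (intro measure_pmf.finite_measure_mono) auto
  also have "\<dots> \<le> measure_pmf.prob Q {y. S y \<ge> \<mu> + l} + measure_pmf.prob Q {y. S y \<le> \<mu> - l}"
    by (rule measure_Un_le) auto
  finally show ?thesis using up lo unfolding Q_def S_def by simp
qed



lemma expect_if_single:
  fixes Q :: "'b pmf" and k :: real
  shows "measure_pmf.expectation Q (\<lambda>w. if w = t then k else 0) = k * pmf Q t"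
proof -
  have "(\<lambda>w. if w = t then k else 0) = (\<lambda>w. k * indicator {t} w)" by (auto simp: indicator_def)
  then show ?thesis by (simp add: measure_pmf_single)
qed

theorem lemma3p3:
  fixes V :: "'a set" and N :: "'a \<Rightarrow> 'a set" and s :: 'a
    and \<alpha> rmax \<epsilon> \<delta> pf :: real
    and p r :: "'a \<Rightarrow> real"
  assumes "finite V"
    and "\<forall>v\<in>V. N v \<subseteq> V \<and> N v \<noteq> {}"
    and "0 < \<alpha>" and "\<alpha> < 1"
    and "s \<in> V" and "rmax > 0" and "\<epsilon> > 0"
    and "0 < \<delta>" and "\<delta> \<le> 1"
    and "0 < pf" and "pf < 1"
    and "fp_result \<alpha> N V rmax s (p, r)"
  shows "\<forall>t\<in>V. ppr \<alpha> N s t > \<delta> \<longrightarrow>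
     measure_pmf.prob
       (fora_pmf \<alpha> N V p r
          ((\<Sum>v\<in>V. r v) * ((2 * \<epsilon> / 3 + 2) * ln (2 / pf) / (\<epsilon>\<^sup>2 * \<delta>))))
       {est. \<bar>ppr \<alpha> N s t - est t\<bar> \<le> \<epsilon> * ppr \<alpha> N s t} \<ge> 1 - pf"
proof (intro ballI impI)
  fix t assume tV: "t \<in> V" and pi_gt: "ppr \<alpha> N s t > \<delta>"
  have inv: "inv_fp \<alpha> N V s (p, r)" by (rule inv_fp_result) (use assms in auto)
  hence Inv: "ppr \<alpha> N s t = p t + (\<Sum>v\<in>V. r v * ppr \<alpha> N v t)"
    and rnn: "\<And>v. r v \<ge> 0" and pnn: "\<And>v. p v \<ge> 0" by (auto simp: inv_fp_def)
  define \<pi> where "\<pi> = ppr \<alpha> N s t"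
  define rsum where "rsum = (\<Sum>v\<in>V. r v)"
  define c where "c = (2 * \<epsilon> / 3 + 2) * ln (2 / pf) / (\<epsilon>\<^sup>2 * \<delta>)"
  define \<omega> where "\<omega> = rsum * c"
  define S where "S = {v \<in> V. r v > 0}"
  define om where "om = (\<lambda>v. nat \<lceil>r v * \<omega> / rsum\<rceil>)"
  define a where "a = (\<lambda>v. r v / rsum * (\<omega> / real (om v)))"
  define I where "I = {(v, j). v \<in> S \<and> j < om v}"
  define F where "F = (\<lambda>W t. p t + (\<Sum>(v, j)\<in>I. if W (v, j) = t then a v * rsum / \<omega> else 0))"
  define Pw where "Pw = (\<lambda>(v::'a, j::nat). rwr_pmf \<alpha> N v)"
  define f where "f = (\<lambda>(i::'a \<times> nat) w. if w = t then r (fst i) / real (om (fst i)) else 0)"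
  have lnpos: "ln (2 / pf) > 0" using assms by simp
  have cpos: "c > 0" unfolding c_def using assms lnpos by (intro divide_pos_pos mult_pos_pos) auto
  have finS: "finite S" using assms(1) by (simp add: S_def)
  have rsum_ge: "r v \<le> rsum" if "v \<in> V" for v
    unfolding rsum_def by (rule member_le_sum) (use that rnn assms(1) in auto)
  have rsumpos: "rsum > 0" if "v \<in> S" for v using rsum_ge[of v] that by (auto simp: S_def)
  have om_eq: "r v * \<omega> / rsum = r v * c" if "v \<in> S" for v
    using rsumpos[OF that] by (simp add: \<omega>_def)
  have om_ge: "real (om v) \<ge> r v * c" if "v \<in> S" for v
    unfolding om_def om_eq[OF that] by linarith
  have om_pos: "om v > 0" if "v \<in> S" for v
  proof -
    have "r v * c > 0" using that cpos by (simp add: S_def)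
    thus ?thesis using om_ge[OF that] by simp
  qed
  have I_Sigma: "I = Sigma S (\<lambda>v. {..<om v})" by (auto simp: I_def)
  have finI: "finite I" unfolding I_Sigma using finS by auto
  have fora: "fora_pmf \<alpha> N V p r \<omega> = map_pmf F (Pi_pmf I undefined Pw)"
    unfolding fora_pmf_def Let_def F_def I_def a_def om_def S_def rsum_def Pw_def ..
  have FW: "F W t = p t + (\<Sum>i\<in>I. f i (W i))" for W
  proof -
    have "(\<Sum>(v, j)\<in>I. if W (v, j) = t then a v * rsum / \<omega> else 0) = (\<Sum>i\<in>I. f i (W i))"
    proof (intro sum.cong refl)
      fix i assume "i \<in> I"
      then obtain v j where i: "i = (v, j)" "v \<in> S" by (auto simp: I_def)
      have "a v * rsum / \<omega> = r v / real (om v)"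
        using rsumpos[OF i(2)] cpos om_pos[OF i(2)] by (simp add: a_def \<omega>_def)
      thus "(case i of (v, j) \<Rightarrow> if W (v, j) = t then a v * rsum / \<omega> else 0) = f i (W i)"
        using i by (simp add: f_def)
    qed
    thus ?thesis by (simp add: F_def)
  qed
  define \<mu> where "\<mu> = (\<Sum>i\<in>I. measure_pmf.expectation (Pw i) (f i))"
  have mu_eq: "\<mu> = \<pi> - p t"
  proof -
    have "\<mu> = (\<Sum>v\<in>S. \<Sum>j<om v. measure_pmf.expectation (Pw (v, j)) (f (v, j)))"
      unfolding \<mu>_def I_Sigma using finS by (subst sum.Sigma) auto
    also have "\<dots> = (\<Sum>v\<in>S. \<Sum>j<om v. r v / real (om v) * ppr \<alpha> N v t)"
      by (simp add: Pw_def f_def expect_if_single ppr_def)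
    also have "\<dots> = (\<Sum>v\<in>S. r v * ppr \<alpha> N v t)"
      by (intro sum.cong refl) (use om_pos in auto)
    also have "\<dots> = (\<Sum>v\<in>V. r v * ppr \<alpha> N v t)"
    proof (rule sum.mono_neutral_left[OF assms(1)])
      show "S \<subseteq> V" by (auto simp: S_def)
      show "\<forall>i\<in>V - S. r i * ppr \<alpha> N i t = 0"
        using rnn by (auto simp: S_def less_le)
    qed
    finally show ?thesis using Inv by (simp add: \<pi>_def)
  qed
  have pipos: "\<pi> > 0" using pi_gt assms by (simp add: \<pi>_def)
  define l where "l = \<epsilon> * \<pi>"
  have lpos: "l > 0" using pipos assms by (simp add: l_def)
  have bern: "measure_pmf.prob (Pi_pmf I undefined Pw) {y. \<bar>(\<Sum>i\<in>I. f i (y i)) - \<mu>\<bar> \<ge> l}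
           \<le> 2 * exp (- (l\<^sup>2 / (2 * (1 / c) * (\<pi> + l / 3))))"
  proof (rule bernstein_Pi[OF finI])
    show "0 < 1 / c" using cpos by simp
    show "0 \<le> f i y" if "i \<in> I" for i y using rnn by (auto simp: f_def)
    show "f i y \<le> 1 / c" if "i \<in> I" for i y
    proof -
      obtain v j where i: "i = (v, j)" "v \<in> S" using \<open>i \<in> I\<close> by (auto simp: I_def)
      have "r v / real (om v) \<le> 1 / c"
        using om_ge[OF i(2)] om_pos[OF i(2)] cpos by (simp add: field_simps)
      thus ?thesis using i cpos by (auto simp: f_def)
    qed
    show "\<mu> \<le> \<pi>" using mu_eq pnn[of t] by simp
  qed (use pipos lpos \<mu>_def in auto)
  have expo: "l\<^sup>2 / (2 * (1 / c) * (\<pi> + l / 3)) = \<pi> * ln (2 / pf) / \<delta>"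
  proof -
    have h: "2 * \<epsilon> / 3 + 2 > 0" "\<epsilon> \<noteq> 0" "\<pi> \<noteq> 0" "\<delta> \<noteq> 0" "\<pi> + \<epsilon> * \<pi> / 3 \<noteq> 0"
    proof -
      have "\<epsilon> * \<pi> / 3 > 0" using pipos assms by simp
      thus "\<pi> + \<epsilon> * \<pi> / 3 \<noteq> 0" using pipos by linarith
    qed (use pipos assms in auto)
    have "l\<^sup>2 / (2 * (1 / c) * (\<pi> + l / 3)) = c * \<epsilon>\<^sup>2 * (\<pi> * \<pi>) / (\<pi> * (2 * \<epsilon> / 3 + 2))"
      using h cpos by (simp add: l_def field_simps power2_eq_square)
    also have "\<dots> = c * \<epsilon>\<^sup>2 * \<pi> / (2 * \<epsilon> / 3 + 2)"
      using h by simp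
    also have "c * \<epsilon>\<^sup>2 = (2 * \<epsilon> / 3 + 2) * (ln (2 / pf) / \<delta>)"
      using h by (simp add: c_def power2_eq_square)
    also have "(2 * \<epsilon> / 3 + 2) * (ln (2 / pf) / \<delta>) * \<pi> / (2 * \<epsilon> / 3 + 2) = \<pi> * ln (2 / pf) / \<delta>"
      using h by simp
    finally show ?thesis .
  qed
  have "\<pi> * ln (2 / pf) / \<delta> \<ge> ln (2 / pf)"
    using pi_gt assms lnpos by (simp add: \<pi>_def field_simps)
  hence "2 * exp (- (l\<^sup>2 / (2 * (1 / c) * (\<pi> + l / 3)))) \<le> 2 * exp (- ln (2 / pf))"
    unfolding expo by simp
  also have "\<dots> = pf" using assms by (simp add: exp_minus)
  finally have bad: "measure_pmf.prob (Pi_pmf I undefined Pw) {y. \<bar>(\<Sum>i\<in>I. f i (y i)) - \<mu>\<bar> \<ge> l} \<le> pf"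
    using bern by linarith
  define G where "G = F -` {est. \<bar>\<pi> - est t\<bar> \<le> \<epsilon> * \<pi>}"
  have "UNIV - G \<subseteq> {y. \<bar>(\<Sum>i\<in>I. f i (y i)) - \<mu>\<bar> \<ge> l}"
    by (auto simp: G_def FW mu_eq l_def)
  hence "measure_pmf.prob (Pi_pmf I undefined Pw) (UNIV - G) \<le> measure_pmf.prob (Pi_pmf I undefined Pw) {y. \<bar>(\<Sum>i\<in>I. f i (y i)) - \<mu>\<bar> \<ge> l}"
    by (intro measure_pmf.finite_measure_mono) auto
  hence "measure_pmf.prob (Pi_pmf I undefined Pw) (UNIV - G) \<le> pf"
    using bad by linarith
  moreover have "measure_pmf.prob (Pi_pmf I undefined Pw) (UNIV - G) = 1 - measure_pmf.prob (Pi_pmf I undefined Pw) G"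
    using measure_pmf.prob_compl[of G] by simp
  ultimately have "measure_pmf.prob (Pi_pmf I undefined Pw) G \<ge> 1 - pf" by linarith
  thus "measure_pmf.prob (fora_pmf \<alpha> N V p r ((\<Sum>v\<in>V. r v) * ((2 * \<epsilon> / 3 + 2) * ln (2 / pf) / (\<epsilon>\<^sup>2 * \<delta>))))
       {est. \<bar>ppr \<alpha> N s t - est t\<bar> \<le> \<epsilon> * ppr \<alpha> N s t} \<ge> 1 - pf"
    unfolding rsum_def[symmetric] c_def[symmetric] \<omega>_def[symmetric] fora \<pi>_def[symmetric]
    by (simp add: G_def)
qed


end
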